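(* Let $V$ be a metric 3-Lie algebra and $I\lhd V$ an ideal. Then (1) $I^\perp\lhd V$ is also an ideal; (2) $I^\perp\lhd Z(I)$; and (3) if $I$ is minimal then $I^\perp$ is maximal.
   Context: A metric 3-Lie algebra is a finite-dimensional real vector space $V$ with a totally skewsymmetric trilinear bracket satisfying the fundamental identity $[x,y,[z,s,t]]=[[x,y,z],s,t]+[z,[x,y,s],t]+[z,s,[x,y,t]]$ and a nondegenerate symmetric bilinear form $\langle-,-\rangle$ with $\langle[x,y,z],s\rangle+\langle z,[x,y,s]\rangle=0$. For subspaces $W_i$, $[W_1,W_2,W_3]$ is the span of brackets of their elements. An ideal $I\lhd V$ is a subspace with $[I,V,V]\subset I$; for a subalgebra $S$ (subspace with $[S,S,S]\subset S$), $I\lhd S$ means $I\subset S$ and $[I,S,S]\subset I$. $I^\perp$ is the orthogonal complement with respect to $\langle-,-\rangle$. The centraliser of a subspace $W$ is $Z(W)=\{z\in V:[z,w,y]=0\ \forall w\in W,y\in V\}$ (a subalgebra). An ideal $I$ is minimal if every ideal contained in $I$ is $0$ or $I$; maximal if every ideal containing $I$ is $I$ or $V$. *)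

theory Defs
  imports "HOL-Analysis.Analysis"
begin

text \<open>A metric 3-Lie algebra on a finite-dimensional real vector space (modelled by a type
  of class euclidean_space; its own inner product is NOT used), given by a ternary bracket
  br and a bilinear form B.\<close>

definition metric_3lie :: "('a::euclidean_space \<Rightarrow> 'a \<Rightarrow> 'a \<Rightarrow> 'a) \<Rightarrow> ('a \<Rightarrow> 'a \<Rightarrow> real) \<Rightarrow> bool" where
  "metric_3lie br B \<longleftrightarrow>
     (\<forall>y z. linear (\<lambda>x. br x y z)) \<and> (\<forall>x z. linear (\<lambda>y. br x y z)) \<and> (\<forall>x y. linear (\<lambda>z. br x y z)) \<and>
     (\<forall>x y z. br y x z = - br x y z) \<and> (\<forall>x y z. br x z y = - br x y z) \<and>
     (\<forall>x y z s t. br x y (br z s t) = br (br x y z) s t + br z (br x y s) t + br z s (br x y t)) \<and>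
     (\<forall>y. linear (\<lambda>x. B x y)) \<and> (\<forall>x. linear (\<lambda>y. B x y)) \<and>
     (\<forall>x y. B x y = B y x) \<and>
     (\<forall>x. (\<forall>y. B x y = 0) \<longrightarrow> x = 0) \<and>
     (\<forall>x y z s. B (br x y z) s + B z (br x y s) = 0)"

definition ideal3 :: "('a::real_vector \<Rightarrow> 'a \<Rightarrow> 'a \<Rightarrow> 'a) \<Rightarrow> 'a set \<Rightarrow> bool" where
  "ideal3 br I \<longleftrightarrow> subspace I \<and> (\<forall>x\<in>I. \<forall>y z. br x y z \<in> I)"

definition ideal3_in :: "('a::real_vector \<Rightarrow> 'a \<Rightarrow> 'a \<Rightarrow> 'a) \<Rightarrow> 'a set \<Rightarrow> 'a set \<Rightarrow> bool" where
  "ideal3_in br I S \<longleftrightarrow> subspace I \<and> I \<subseteq> S \<and> (\<forall>x\<in>I. \<forall>y\<in>S. \<forall>z\<in>S. br x y z \<in> I)"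

definition orth3 :: "('a \<Rightarrow> 'a \<Rightarrow> real) \<Rightarrow> 'a set \<Rightarrow> 'a set" where
  "orth3 B W = {x. \<forall>y\<in>W. B x y = 0}"

definition centraliser3 :: "('a::real_vector \<Rightarrow> 'a \<Rightarrow> 'a \<Rightarrow> 'a) \<Rightarrow> 'a set \<Rightarrow> 'a set" where
  "centraliser3 br W = {z. \<forall>w\<in>W. \<forall>y. br z w y = 0}"

definition minimal_ideal3 :: "('a::real_vector \<Rightarrow> 'a \<Rightarrow> 'a \<Rightarrow> 'a) \<Rightarrow> 'a set \<Rightarrow> bool" where
  "minimal_ideal3 br I \<longleftrightarrow> ideal3 br I \<and> (\<forall>J. ideal3 br J \<and> J \<subseteq> I \<longrightarrow> J = {0} \<or> J = I)"

definition maximal_ideal3 :: "('a::real_vector \<Rightarrow> 'a \<Rightarrow> 'a \<Rightarrow> 'a) \<Rightarrow> 'a set \<Rightarrow> bool" where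
  "maximal_ideal3 br I \<longleftrightarrow> ideal3 br I \<and> (\<forall>J. ideal3 br J \<and> I \<subseteq> J \<longrightarrow> J = I \<or> J = UNIV)"

end

theory Submission
  imports Defs
begin

lemma repr_lemma:
  fixes B :: "'a::euclidean_space \<Rightarrow> 'a \<Rightarrow> real"
  assumes lin: "linear (\<lambda>y. B x y)"
  shows "B x y = inner (\<Sum>b\<in>Basis. B x b *\<^sub>R b) y"
proof -
  have "B x y = B x (\<Sum>b\<in>Basis. (y \<bullet> b) *\<^sub>R b)" by (simp add: euclidean_representation)
  also have "\<dots> = (\<Sum>b\<in>Basis. (y \<bullet> b) * B x b)"
    by (simp add: linear_sum[OF lin] linear_scale[OF lin])
  also have "\<dots> = inner (\<Sum>b\<in>Basis. B x b *\<^sub>R b) y"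
    by (simp add: inner_sum_left inner_commute[of y] mult.commute)
  finally show ?thesis .
qed

lemma orth_orth:
  fixes br :: "'a::euclidean_space \<Rightarrow> 'a \<Rightarrow> 'a \<Rightarrow> 'a" and B :: "'a \<Rightarrow> 'a \<Rightarrow> real"
  assumes M: "metric_3lie br B" and W: "subspace W"
  shows "orth3 B (orth3 B W) = W"
proof -
  define T where "T x = (\<Sum>b\<in>Basis. B x b *\<^sub>R b)" for x
  have linB1: "\<And>y. linear (\<lambda>x. B x y)" and linB2: "\<And>x. linear (\<lambda>y. B x y)"
    and sym: "\<And>x y. B x y = B y x" and nd: "\<And>x. (\<forall>y. B x y = 0) \<Longrightarrow> x = 0"
    using M unfolding metric_3lie_def by blast+
  have rep: "\<And>x y. B x y = inner (T x) y" unfolding T_def using repr_lemma linB2 by blast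
  have linT: "linear T" unfolding T_def
    by (rule linearI) (simp_all add: linear_add[OF linB1] linear_scale[OF linB1] scaleR_add_left
        sum.distrib scaleR_sum_right)
  have injT: "inj T"
  proof (rule linear_injective_0[OF linT, THEN iffD2], intro allI impI)
    fix x assume "T x = 0" then show "x = 0" using nd rep by simp
  qed
  have surjT: "surj T" using linear_injective_imp_surjective[OF linT injT] by simp
  have o1: "orth3 B V = {x. T x \<in> V\<^sup>\<bottom>}" for V
    by (auto simp: orth3_def orthogonal_comp_def orthogonal_def rep inner_commute)
  have e: "B x y = inner (T y) x" for x y using rep sym by metis
  have "orth3 B (orth3 B W) = {x. \<forall>y. T y \<in> W\<^sup>\<bottom> \<longrightarrow> inner (T y) x = 0}"
    apply (subst o1[of W])
    apply (simp only: orth3_def mem_Collect_eq e)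
    by blast
  also have "\<dots> = {x. \<forall>u\<in>W\<^sup>\<bottom>. inner u x = 0}"
    using surjT by (metis (no_types, lifting) surjD)
  also have "\<dots> = W\<^sup>\<bottom>\<^sup>\<bottom>" by (auto simp: orthogonal_comp_def orthogonal_def)
  also have "\<dots> = W" using orthogonal_comp_self[OF W] .
  finally show ?thesis .
qed

lemma orth_ideal:
  fixes br :: "'a::euclidean_space \<Rightarrow> 'a \<Rightarrow> 'a \<Rightarrow> 'a" and B :: "'a \<Rightarrow> 'a \<Rightarrow> real"
  assumes M: "metric_3lie br B" and I: "ideal3 br I"
  shows "ideal3 br (orth3 B I)"
proof -
  have linB1: "\<And>y. linear (\<lambda>x. B x y)"
    and sym: "\<And>x y. B x y = B y x"
    and a1: "\<And>x y z. br y x z = - br x y z" and a2: "\<And>x y z. br x z y = - br x y z"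
    and inv: "\<And>x y z s. B (br x y z) s + B z (br x y s) = 0"
    using M unfolding metric_3lie_def by blast+
  have Icl: "\<And>x y z. x \<in> I \<Longrightarrow> br x y z \<in> I" using I unfolding ideal3_def by blast
  have cyc: "br y z x = br x y z" for x y z by (simp only: a2[of y x z] a1[of x y z] minus_minus)
  have sub: "subspace (orth3 B I)"
    unfolding subspace_def orth3_def
    using linear_add[OF linB1] linear_scale[OF linB1] linear_0[OF linB1] by auto
  have "br x y z \<in> orth3 B I" if "x \<in> orth3 B I" for x y z
  proof -
    have "B (br x y z) w = 0" if w: "w \<in> I" for w
    proof -
      have e: "B (br x y z) w = - B x (br y z w)" using inv[of y z x w] unfolding cyc[where x=x and y=y and z=z] by linarith
      have "br y z w \<in> I" by (subst cyc) (rule Icl[OF w])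
      then have "B x (br y z w) = 0" using \<open>x \<in> orth3 B I\<close> unfolding orth3_def by blast
      then show ?thesis using e by simp
    qed
    then show ?thesis unfolding orth3_def by auto
  qed
  then show ?thesis using sub unfolding ideal3_def by auto
qed

theorem mainTheorem9:
  fixes br :: "'a::euclidean_space \<Rightarrow> 'a \<Rightarrow> 'a \<Rightarrow> 'a" and B :: "'a \<Rightarrow> 'a \<Rightarrow> real" and I :: "'a set"
  assumes "metric_3lie br B" and "ideal3 br I"
  shows "ideal3 br (orth3 B I)
    \<and> ideal3_in br (orth3 B I) (centraliser3 br I)
    \<and> (minimal_ideal3 br I \<longrightarrow> maximal_ideal3 br (orth3 B I))"
proof -
  note M = assms(1) and I = assms(2)
  have linB1: "\<And>y. linear (\<lambda>x. B x y)" and sym: "\<And>x y. B x y = B y x" and nd: "\<And>x. (\<forall>y. B x y = 0) \<Longrightarrow> x = 0"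
    and a1: "\<And>x y z. br y x z = - br x y z" and a2: "\<And>x y z. br x z y = - br x y z"
    and inv: "\<And>x y z s. B (br x y z) s + B z (br x y s) = 0"
    using M unfolding metric_3lie_def by blast+
  have Icl: "\<And>x y z. x \<in> I \<Longrightarrow> br x y z \<in> I" using I unfolding ideal3_def by blast
  have cyc: "br y z x = br x y z" for x y z by (simp only: a2[of y x z] a1[of x y z] minus_minus)
  have P1: "ideal3 br (orth3 B I)" by (rule orth_ideal[OF M I])
  have sub: "orth3 B I \<subseteq> centraliser3 br I"
  proof
    fix z assume z: "z \<in> orth3 B I"
    have "br z w y = 0" if w: "w \<in> I" for w y
    proof (rule nd, intro allI)
      fix s
      have "B (br w y z) s = - B z (br w y s)" using inv[of w y z s] by simp
      moreover have "br w y s \<in> I" using Icl[OF w] .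
      moreover have "B z (br w y s) = 0" using z \<open>br w y s \<in> I\<close> unfolding orth3_def by blast
      ultimately show "B (br z w y) s = 0" by (simp only: cyc[where x=y and y=z and z=w] cyc[where x=w and y=y and z=z])
    qed
    then show "z \<in> centraliser3 br I" unfolding centraliser3_def by auto
  qed
  have P2: "ideal3_in br (orth3 B I) (centraliser3 br I)"
    using P1 sub unfolding ideal3_def ideal3_in_def by blast
  have P3: "maximal_ideal3 br (orth3 B I)" if min: "minimal_ideal3 br I"
  proof -
    have "J = orth3 B I \<or> J = UNIV" if J: "ideal3 br J" "orth3 B I \<subseteq> J" for J
    proof -
      have "orth3 B J \<subseteq> orth3 B (orth3 B I)" using J(2) unfolding orth3_def by auto
      also have "\<dots> = I" using orth_orth[OF M] I unfolding ideal3_def by blast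
      finally have "orth3 B J = {0} \<or> orth3 B J = I"
        using min orth_ideal[OF M J(1)] unfolding minimal_ideal3_def by blast
      moreover have JJ: "orth3 B (orth3 B J) = J" using orth_orth[OF M] J(1) unfolding ideal3_def by blast
      moreover have "orth3 B {0} = UNIV"
        proof -
        have "B x 0 = 0" for x by (subst sym) (rule linear_0[OF linB1])
        then show ?thesis unfolding orth3_def by simp
      qed
      ultimately show ?thesis by metis
    qed
    then show ?thesis using P1 unfolding maximal_ideal3_def by blast
  qed
  show ?thesis using P1 P2 P3 by blast
qed

end
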